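(* Let $X$ be a topological space and $A$ a finitely non-Hausdorff subset of $X$. Then $\overline{A}$ is a finitely non-Hausdorff subset of $X$.
   Context: A non-empty subset $A$ of a topological space $X$ is called finitely non-Hausdorff if for every non-empty finite subset $F\subseteq A$ and every family $\{U_x:x\in F\}$ where each $U_x$ is an open neighborhood of $x$, we have $\bigcap_{x\in F}U_x\neq\emptyset$. *)

theory Defs
  imports "HOL-Analysis.Analysis"
begin

definition finitely_non_hausdorff :: "'a topology \<Rightarrow> 'a set \<Rightarrow> bool" where
  "finitely_non_hausdorff X A \<longleftrightarrow>
     A \<subseteq> topspace X \<and> A \<noteq> {} \<and>
     (\<forall>F U. finite F \<and> F \<noteq> {} \<and> F \<subseteq> A \<and>
            (\<forall>x\<in>F. openin X (U x) \<and> x \<in> U x)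
            \<longrightarrow> (\<Inter>x\<in>F. U x) \<noteq> {})"

end

theory Submission
  imports Defs
begin

theorem corollary2p7:
  fixes X :: "'a topology" and A :: "'a set"
  assumes "finitely_non_hausdorff X A"
  shows "finitely_non_hausdorff X (X closure_of A)"
proof -
  have AX: "A \<subseteq> topspace X" and Ane: "A \<noteq> {}" and
    H: "\<And>F U. finite F \<Longrightarrow> F \<noteq> {} \<Longrightarrow> F \<subseteq> A \<Longrightarrow>
            (\<forall>x\<in>F. openin X (U x) \<and> x \<in> U x) \<Longrightarrow> (\<Inter>x\<in>F. U x) \<noteq> {}"
    using assms unfolding finitely_non_hausdorff_def by auto
  have "\<forall>F U. finite F \<and> F \<noteq> {} \<and> F \<subseteq> X closure_of A \<and>
            (\<forall>x\<in>F. openin X (U x) \<and> x \<in> U x)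
            \<longrightarrow> (\<Inter>x\<in>F. U x) \<noteq> {}"
  proof (intro allI impI)
    fix F U
    assume a: "finite F \<and> F \<noteq> {} \<and> F \<subseteq> X closure_of A \<and> (\<forall>x\<in>F. openin X (U x) \<and> x \<in> U x)"
    have "\<forall>x\<in>F. \<exists>y. y \<in> A \<and> y \<in> U x"
      using a by (meson in_closure_of subsetD)
    then obtain p where p: "\<And>x. x \<in> F \<Longrightarrow> p x \<in> A \<and> p x \<in> U x" by metis
    define V where "V y = \<Inter> (U ` {x\<in>F. p x = y})" for y
    have "(\<Inter>y\<in>p ` F. V y) \<noteq> {}"
    proof (rule H)
      show "finite (p ` F)" "p ` F \<noteq> {}" "p ` F \<subseteq> A" using a p by auto
      show "\<forall>y\<in>p ` F. openin X (V y) \<and> y \<in> V y"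
      proof
        fix y assume y: "y \<in> p ` F"
        have "openin X (V y)" unfolding V_def
          using y a by (intro openin_Inter) auto
        moreover have "y \<in> V y" unfolding V_def using p by auto
        ultimately show "openin X (V y) \<and> y \<in> V y" by blast
      qed
    qed
    moreover have "(\<Inter>y\<in>p ` F. V y) \<subseteq> (\<Inter>x\<in>F. U x)"
    proof
      fix z assume z: "z \<in> (\<Inter>y\<in>p ` F. V y)"
      show "z \<in> (\<Inter>x\<in>F. U x)"
      proof
        fix x assume x: "x \<in> F"
        then have "z \<in> V (p x)" using z by blast
        then show "z \<in> U x" unfolding V_def using x by blast
      qed
    qed
    ultimately show "(\<Inter>x\<in>F. U x) \<noteq> {}" by blast
  qed
  moreover have "X closure_of A \<noteq> {}" using closure_of_subset[OF AX] Ane by blast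
  ultimately show ?thesis unfolding finitely_non_hausdorff_def
    using closure_of_subset_topspace[of X A] by simp
qed

end
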